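(* Let $X$ (valued in $\mathbb R^N$, $\mathbb E(X)=0$) and $Y$ (valued in $\mathbb R^d$) be random vectors such that $\nu=\mathrm{Law}(X,Y)$ has compact support $\mathrm{spt}(\nu)$, and let $\mu$ be the uniform measure on $[0,1]^d$. Consider the dual value $$\inf\Big\{\int\psi\,d\nu+\int_{[0,1]^d}\varphi\,d\mu\Big\}$$ where the infimum is taken over triples $(\psi,\varphi,b)$ with $\psi:\mathrm{spt}(\nu)\to\mathbb R$, $\varphi:[0,1]^d\to\mathbb R$, $b:[0,1]^d\to\mathbb R^N$ satisfying $$\psi(x,y)+\varphi(t)+b(t)\cdot x\ge t\cdot y\quad\text{for all }(x,y)\in\mathrm{spt}(\nu)\text{ and (in case of $L^1$ functions) a.e. }t\in[0,1]^d.$$ Then this infimum is the same in each of the following three cases: (a) $\psi\in C(\mathrm{spt}(\nu))$, $\varphi\in C([0,1]^d)$, $b\in C([0,1]^d;\mathbb R^N)$; (b) $\psi\in C(\mathrm{spt}(\nu))$ and $\varphi,b$ are restrictions to $[0,1]^d$ of $C^\infty$ functions; (c) $\psi$ Borel and $\nu$-integrable, $\varphi\in L^1((0,1)^d)$, $b\in L^1((0,1)^d)^N$. *)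

theory Defs
  imports "HOL-Analysis.Analysis" "HOL-Probability.Probability"
begin

text \<open>Support of a measure on a metric space: the set of points all of whose
  open neighbourhoods (balls) have positive measure (= smallest closed set of full measure
  for the finite Borel measures considered here).\<close>
definition spt :: "'a::metric_space measure \<Rightarrow> 'a set" where
  "spt M = {z. \<forall>e>0. emeasure M (ball z e) > 0}"

fun Ck :: "nat \<Rightarrow> ('a::euclidean_space \<Rightarrow> 'b::real_normed_vector) \<Rightarrow> bool" where
  "Ck 0 f = continuous_on UNIV f"
| "Ck (Suc k) f = (\<exists>f'. (\<forall>x. (f has_derivative f' x) (at x)) \<and> (\<forall>v. Ck k (\<lambda>x. f' x v)))"

definition smooth :: "('a::euclidean_space \<Rightarrow> 'b::real_normed_vector) \<Rightarrow> bool" where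
  "smooth f = (\<forall>k. Ck k f)"

definition dual_ok ::
  "('x::euclidean_space \<times> 'y::euclidean_space) \<Rightarrow> real \<Rightarrow> real \<Rightarrow> 'x \<Rightarrow> 'y \<Rightarrow> bool" where
  "dual_ok z psiz phit bt t = (psiz + phit + bt \<bullet> fst z \<ge> t \<bullet> snd z)"

definition dual_value_cont ::
  "('x::euclidean_space \<times> 'y::euclidean_space) measure \<Rightarrow> ereal" where
  "dual_value_cont \<nu> = Inf {ereal ((LINT z:spt \<nu>|\<nu>. psi z) + (LINT t:cbox 0 One|lborel. phi t)) |
      psi phi (b :: 'y \<Rightarrow> 'x).
      continuous_on (spt \<nu>) psi \<and> continuous_on (cbox 0 One) phi \<and> continuous_on (cbox 0 One) b \<and>
      (\<forall>z\<in>spt \<nu>. \<forall>t\<in>cbox 0 One. dual_ok z (psi z) (phi t) (b t) t)}"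

definition dual_value_smooth ::
  "('x::euclidean_space \<times> 'y::euclidean_space) measure \<Rightarrow> ereal" where
  "dual_value_smooth \<nu> = Inf {ereal ((LINT z:spt \<nu>|\<nu>. psi z) + (LINT t:cbox 0 One|lborel. phi t)) |
      psi phi (b :: 'y \<Rightarrow> 'x).
      continuous_on (spt \<nu>) psi \<and>
      (\<exists>\<Phi>. smooth (\<Phi> :: 'y \<Rightarrow> real) \<and> (\<forall>t\<in>cbox 0 One. phi t = \<Phi> t)) \<and>
      (\<exists>B. smooth (B :: 'y \<Rightarrow> 'x) \<and> (\<forall>t\<in>cbox 0 One. b t = B t)) \<and>
      (\<forall>z\<in>spt \<nu>. \<forall>t\<in>cbox 0 One. dual_ok z (psi z) (phi t) (b t) t)}"

definition dual_value_L1 ::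
  "('x::euclidean_space \<times> 'y::euclidean_space) measure \<Rightarrow> ereal" where
  "dual_value_L1 \<nu> = Inf {ereal ((LINT z:spt \<nu>|\<nu>. psi z) + (LINT t:box 0 One|lborel. phi t)) |
      psi phi (b :: 'y \<Rightarrow> 'x).
      psi \<in> borel_measurable borel \<and> integrable \<nu> psi \<and>
      phi \<in> borel_measurable borel \<and> set_integrable lborel (box 0 One) phi \<and>
      b \<in> borel_measurable borel \<and> set_integrable lborel (box 0 One) b \<and>
      (AE t in lborel. t \<in> box 0 One \<longrightarrow> (\<forall>z\<in>spt \<nu>. dual_ok z (psi z) (phi t) (b t) t))}"

end

theory Submission imports Defs begin

lemma real_poly_deriv:
  fixes p :: "'a::real_normed_vector \<Rightarrow> real"
  assumes "real_polynomial_function p"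
  shows "\<exists>p'. (\<forall>x. (p has_derivative p' x) (at x)) \<and> (\<forall>v. real_polynomial_function (\<lambda>x. p' x v))"
  using assms
proof (induction p rule: real_polynomial_function.induct)
  case (linear f)
  then show ?case by (intro exI[of _ "\<lambda>x. f"]) (auto intro: bounded_linear_imp_has_derivative)
next
  case (const c)
  then show ?case by (intro exI[of _ "\<lambda>x v. 0"]) auto
next
  case (add f g)
  then obtain f' g' where f': "\<forall>x. (f has_derivative f' x) (at x)" "\<forall>v. real_polynomial_function (\<lambda>x. f' x v)"
    and g': "\<forall>x. (g has_derivative g' x) (at x)" "\<forall>v. real_polynomial_function (\<lambda>x. g' x v)" by blast
  show ?case
    by (intro exI[of _ "\<lambda>x v. f' x v + g' x v"]) (use f' g' in \<open>auto intro: has_derivative_add\<close>)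
next
  case (mult f g)
  then obtain f' g' where f': "\<forall>x. (f has_derivative f' x) (at x)" "\<forall>v. real_polynomial_function (\<lambda>x. f' x v)"
    and g': "\<forall>x. (g has_derivative g' x) (at x)" "\<forall>v. real_polynomial_function (\<lambda>x. g' x v)" by blast
  show ?case
    by (intro exI[of _ "\<lambda>x v. f x * g' x v + f' x v * g x"]) (use f' g' mult.hyps in \<open>auto intro!: has_derivative_mult real_polynomial_function.intros(3,4)\<close>)
qed

lemma poly_deriv:
  fixes p :: "'a::real_normed_vector \<Rightarrow> 'b::euclidean_space"
  assumes "polynomial_function p"
  shows "\<exists>p'. (\<forall>x. (p has_derivative p' x) (at x)) \<and> (\<forall>v. polynomial_function (\<lambda>x. p' x v))"
proof -
  have "\<forall>b\<in>Basis. \<exists>q. (\<forall>x. ((\<lambda>x. p x \<bullet> b) has_derivative q x) (at x)) \<and> (\<forall>v. real_polynomial_function (\<lambda>x. q x v))"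
    using assms unfolding polynomial_function_iff_Basis_inner by (blast intro: real_poly_deriv)
  then obtain q where q: "\<And>b. b\<in>Basis \<Longrightarrow> (\<forall>x. ((\<lambda>x. p x \<bullet> b) has_derivative q b x) (at x)) \<and> (\<forall>v. real_polynomial_function (\<lambda>x. q b x v))"
    by metis
  have eq: "p = (\<lambda>x. \<Sum>b\<in>Basis. (p x \<bullet> b) *\<^sub>R b)"
    by (simp add: euclidean_representation)
  show ?thesis
  proof (intro exI[of _ "\<lambda>x v. \<Sum>b\<in>Basis. q b x v *\<^sub>R b"] conjI allI)
    fix x
    have "((\<lambda>x. \<Sum>b\<in>Basis. (p x \<bullet> b) *\<^sub>R b) has_derivative (\<lambda>v. \<Sum>b\<in>Basis. q b x v *\<^sub>R b)) (at x)"
      by (intro has_derivative_sum has_derivative_scaleR_left) (use q in blast)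
    then show "(p has_derivative (\<lambda>v. \<Sum>b\<in>Basis. q b x v *\<^sub>R b)) (at x)"
      using eq by metis
  next
    fix v
    show "polynomial_function (\<lambda>x. \<Sum>b\<in>Basis. q b x v *\<^sub>R b)"
      by (intro polynomial_function_sum polynomial_function_mult) (use q in \<open>auto simp: real_polynomial_function_eq\<close>)
  qed
qed

lemma poly_Ck: "polynomial_function (p :: 'a::euclidean_space \<Rightarrow> 'b::euclidean_space) \<Longrightarrow> Ck k p"
proof (induction k arbitrary: p)
  case 0
  then show ?case by (simp add: differentiable_imp_continuous_on differentiable_on_polynomial_function)
next
  case (Suc k)
  then obtain p' where "\<forall>x. (p has_derivative p' x) (at x)" "\<forall>v. polynomial_function (\<lambda>x. p' x v)"
    using poly_deriv by blast
  then show ?case using Suc by auto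
qed

lemma poly_smooth: "polynomial_function (p :: 'a::euclidean_space \<Rightarrow> 'b::euclidean_space) \<Longrightarrow> smooth p"
  by (simp add: smooth_def poly_Ck)


lemma Inf_le_approx:
  fixes A B :: "ereal set"
  assumes "\<And>a e. a \<in> A \<Longrightarrow> e > 0 \<Longrightarrow> \<exists>b\<in>B. b \<le> a + ereal e"
  shows "Inf B \<le> Inf A"
proof (rule Inf_greatest)
  fix a assume a: "a \<in> A"
  show "Inf B \<le> a"
  proof (rule ereal_le_epsilon2)
    fix e :: real assume "0 < e"
    then obtain b where "b \<in> B" "b \<le> a + ereal e" using assms a by blast
    then show "Inf B \<le> a + ereal e" using Inf_lower order_trans by blast
  qed
qed

lemma cont_set_integrable:
  fixes f :: "'a::{metric_space,second_countable_topology} \<Rightarrow> real"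
  assumes "finite_measure M" "sets M = sets borel" "compact S" "continuous_on S f"
  shows "set_integrable M S f"
proof -
  obtain B where B: "\<And>z. z \<in> S \<Longrightarrow> norm (f z) \<le> B"
    using compact_imp_bounded[OF compact_continuous_image[OF assms(4,3)]]
    unfolding bounded_iff by auto
  have meas: "(\<lambda>x. indicator S x *\<^sub>R f x) \<in> borel_measurable M"
  proof -
    have "S \<in> sets borel" using assms(3) compact_imp_closed borel_closed by blast
    then have "(\<lambda>x. indicator S x *\<^sub>R f x) \<in> borel_measurable borel"
      using borel_measurable_continuous_on_indicator[of S f] assms(4) by auto
    then show ?thesis by (subst measurable_cong_sets[OF assms(2) refl])
  qed
  show ?thesis unfolding set_integrable_def
    by (rule finite_measure.integrable_const_bound[OF assms(1), where B="max B 0"])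
       (use B meas in \<open>auto simp: indicator_def intro!: AE_I2 intro: le_max_iff_disj[THEN iffD2]\<close>)
qed


lemma set_integral_add_const:
  fixes f :: "'a \<Rightarrow> real"
  assumes "set_integrable M A f" "A \<in> sets M" "emeasure M A < \<infinity>"
  shows "(LINT x:A|M. f x + c) = (LINT x:A|M. f x) + c * measure M A"
proof -
  have ci: "set_integrable M A (\<lambda>x. c)"
    unfolding set_integrable_def using assms(2,3)
    by (simp add: integrable_real_indicator)
  have "(LINT x:A|M. f x + c) = (LINT x:A|M. f x) + (LINT x:A|M. c)"
    using assms(1) ci by (rule set_integral_add)
  also have "(LINT x:A|M. c) = c * measure M A"
    unfolding set_lebesgue_integral_def using assms(2) by (simp add: Int_absorb2 sets.sets_into_space)
  finally show ?thesis .
qed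


lemma spt_bounded:
  fixes \<nu> :: "('x::euclidean_space \<times> 'y::euclidean_space) measure"
  assumes "compact (spt \<nu>)"
  obtains R where "R \<ge> 0" "\<And>z. z \<in> spt \<nu> \<Longrightarrow> norm z \<le> R"
proof -
  obtain R where "\<And>z. z \<in> spt \<nu> \<Longrightarrow> norm z \<le> R"
    using compact_imp_bounded[OF assms] unfolding bounded_iff by auto
  then show ?thesis using that[of "max R 0"] by force
qed

lemma cont_to_smooth:
  fixes \<nu> :: "('x::euclidean_space \<times> 'y::euclidean_space) measure"
    and psi :: "'x \<times> 'y \<Rightarrow> real" and phi :: "'y \<Rightarrow> real" and b :: "'y \<Rightarrow> 'x"
  assumes nu: "prob_space \<nu>" "sets \<nu> = sets borel" "compact (spt \<nu>)"
    and cont: "continuous_on (spt \<nu>) psi" "continuous_on (cbox 0 One) phi" "continuous_on (cbox 0 One) b"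
    and ok: "\<forall>z\<in>spt \<nu>. \<forall>t\<in>cbox 0 One. dual_ok z (psi z) (phi t) (b t) t" and e: "e > 0"
  shows "\<exists>psi' phi' (b' :: 'y \<Rightarrow> 'x). continuous_on (spt \<nu>) psi' \<and>
      (\<exists>\<Phi>. smooth (\<Phi> :: 'y \<Rightarrow> real) \<and> (\<forall>t\<in>cbox 0 One. phi' t = \<Phi> t)) \<and>
      (\<exists>B. smooth (B :: 'y \<Rightarrow> 'x) \<and> (\<forall>t\<in>cbox 0 One. b' t = B t)) \<and>
      (\<forall>z\<in>spt \<nu>. \<forall>t\<in>cbox 0 One. dual_ok z (psi' z) (phi' t) (b' t) t) \<and>
      (LINT z:spt \<nu>|\<nu>. psi' z) + (LINT t:cbox 0 One|lborel. phi' t)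
        \<le> (LINT z:spt \<nu>|\<nu>. psi z) + (LINT t:cbox 0 One|lborel. phi t) + e"
proof -
  define S where "S = spt \<nu>"
  define C :: "'y set" where "C = cbox 0 One"
  interpret P: prob_space \<nu> by (rule nu(1))
  obtain R where R: "R \<ge> 0" "\<And>z. z \<in> S \<Longrightarrow> norm z \<le> R"
    using spt_bounded[OF nu(3)] unfolding S_def by blast
  define \<delta> where "\<delta> = e / (R + 2)"
  have \<delta>: "\<delta> > 0" using e R by (simp add: \<delta>_def)
  have \<delta>e: "\<delta> * (R + 2) = e" using R by (simp add: \<delta>_def)
  obtain P where P: "polynomial_function P" "\<And>t. t \<in> C \<Longrightarrow> norm (phi t - P t) < \<delta>"
    using Stone_Weierstrass_polynomial_function[OF compact_cbox cont(2) \<delta>] unfolding C_def by blast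
  obtain Bp where Bp: "polynomial_function Bp" "\<And>t. t \<in> C \<Longrightarrow> norm (b t - Bp t) < \<delta>"
    using Stone_Weierstrass_polynomial_function[OF compact_cbox cont(3) \<delta>] unfolding C_def by blast
  define psi' where "psi' = (\<lambda>z. psi z + \<delta> + \<delta> * norm (fst z))"
  have cpsi': "continuous_on S psi'"
    unfolding psi'_def S_def by (intro continuous_intros cont(1))
  have ok': "dual_ok z (psi' z) (P t) (Bp t) t" if z: "z \<in> S" and t: "t \<in> C" for z t
  proof -
    have o: "psi z + phi t + b t \<bullet> fst z \<ge> t \<bullet> snd z"
      using ok z t unfolding dual_ok_def S_def C_def by blast
    have "(b t - Bp t) \<bullet> fst z \<le> norm (b t - Bp t) * norm (fst z)"
      by (rule norm_cauchy_schwarz)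
    also have "\<dots> \<le> \<delta> * norm (fst z)"
      using Bp(2)[OF t] by (intro mult_right_mono) auto
    finally have "(b t - Bp t) \<bullet> fst z \<le> \<delta> * norm (fst z)" .
    moreover have "phi t - P t \<le> \<delta>" using P(2)[OF t] by auto
    ultimately show ?thesis using o unfolding dual_ok_def psi'_def
      by (simp add: inner_diff_left)
  qed
  have fin: "finite_measure \<nu>" by (simp add: P.finite_measure_axioms)
  have Sm: "S \<in> sets \<nu>" unfolding S_def using nu(2,3) compact_imp_closed borel_closed by (metis)
  have Sfin: "emeasure \<nu> S < \<infinity>" using finite_measure.emeasure_finite[OF fin, of S] by (simp add: less_top[symmetric])
  have i1: "set_integrable \<nu> S psi'" by (rule cont_set_integrable[OF fin nu(2)]) (use nu cpsi' in \<open>auto simp: S_def\<close>)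
  have i2: "set_integrable \<nu> S psi" by (rule cont_set_integrable[OF fin nu(2)]) (use nu cont in \<open>auto simp: S_def\<close>)
  have "(LINT z:S|\<nu>. psi' z) \<le> (LINT z:S|\<nu>. psi z + \<delta> * (1 + R))"
  proof (rule set_integral_mono[OF i1])
    show "set_integrable \<nu> S (\<lambda>z. psi z + \<delta> * (1 + R))"
    proof (rule cont_set_integrable[OF fin nu(2)])
      show "compact S" using nu(3) S_def by simp
      show "continuous_on S (\<lambda>z. psi z + \<delta> * (1 + R))"
        using cont(1) unfolding S_def by (intro continuous_intros)
    qed
    fix z assume "z \<in> S"
    then have "norm (fst z) \<le> R" using R(2)[of z] norm_fst_le[of "fst z" "snd z"] by simp
    then show "psi' z \<le> psi z + \<delta> * (1 + R)" using \<delta> unfolding psi'_def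
      by (simp add: algebra_simps)
  qed
  also have "\<dots> = (LINT z:S|\<nu>. psi z) + \<delta> * (1 + R) * measure \<nu> S"
    by (rule set_integral_add_const[OF i2 Sm Sfin])
  also have "\<dots> \<le> (LINT z:S|\<nu>. psi z) + \<delta> * (1 + R)"
    using \<delta> R P.prob_le_1 by (simp add: mult_left_le)
  finally have I1: "(LINT z:S|\<nu>. psi' z) \<le> (LINT z:S|\<nu>. psi z) + \<delta> * (1 + R)" .
  have Cm: "C \<in> sets lborel" "emeasure lborel C < \<infinity>" unfolding C_def by auto
  have mC: "measure lborel C = 1" unfolding C_def by (simp add: measure_lborel_cbox_eq inner_Basis)
  have cP: "continuous_on C P"
    by (simp add: P(1) differentiable_imp_continuous_on differentiable_on_polynomial_function)
  have j1: "set_integrable lborel C P"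
    unfolding set_integrable_def C_def
    by (rule borel_integrable_compact) (use cP in \<open>auto simp: C_def\<close>)
  have j2: "set_integrable lborel C phi"
    unfolding set_integrable_def C_def
    by (rule borel_integrable_compact) (use cont in \<open>auto simp: C_def\<close>)
  have "(LINT t:C|lborel. P t) \<le> (LINT t:C|lborel. phi t + \<delta>)"
  proof (rule set_integral_mono[OF j1])
    show "set_integrable lborel C (\<lambda>t. phi t + \<delta>)"
      unfolding set_integrable_def C_def
    proof (rule borel_integrable_compact)
      show "continuous_on (cbox 0 One) (\<lambda>t. phi t + \<delta>)"
        using cont(2) by (intro continuous_intros)
    qed auto
    fix t assume "t \<in> C" then show "P t \<le> phi t + \<delta>" using P(2) by force
  qed
  also have "\<dots> = (LINT t:C|lborel. phi t) + \<delta>"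
    using set_integral_add_const[OF j2 Cm] mC by simp
  finally have I2: "(LINT t:C|lborel. P t) \<le> (LINT t:C|lborel. phi t) + \<delta>" .
  show ?thesis
  proof (intro exI conjI)
    show "continuous_on (spt \<nu>) psi'" using cpsi' S_def by simp
    show "smooth P" by (rule poly_smooth[OF P(1)])
    show "smooth Bp" by (rule poly_smooth[OF Bp(1)])
    show "\<forall>t\<in>cbox 0 One. P t = P t" by simp
    show "\<forall>t\<in>cbox 0 One. Bp t = Bp t" by simp
    show "\<forall>z\<in>spt \<nu>. \<forall>t\<in>cbox 0 One. dual_ok z (psi' z) (P t) (Bp t) t"
      using ok' unfolding S_def C_def by blast
    show "(LINT z:spt \<nu>|\<nu>. psi' z) + (LINT t:cbox 0 One|lborel. P t)
        \<le> (LINT z:spt \<nu>|\<nu>. psi z) + (LINT t:cbox 0 One|lborel. phi t) + e"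
      using I1 I2 \<delta>e \<delta> unfolding S_def C_def by (simp add: algebra_simps)
  qed
qed


lemma unit_box_measure:
  "emeasure lborel (cbox 0 (One::'a::euclidean_space)) = 1"
  "emeasure lborel (box 0 (One::'a::euclidean_space)) = 1"
  "measure lborel (cbox 0 (One::'a::euclidean_space)) = 1"
  "measure lborel (box 0 (One::'a::euclidean_space)) = 1"
  by (simp_all add: emeasure_lborel_cbox_eq emeasure_lborel_box_eq measure_lborel_cbox_eq measure_lborel_box_eq inner_Basis)

lemma unit_box_AE: "AE t in lborel. t \<in> box 0 (One::'a::euclidean_space) \<longleftrightarrow> t \<in> cbox 0 One"
proof -
  have "emeasure lborel (cbox 0 (One::'a)) - emeasure lborel (box 0 One) = 0"
    by (simp add: unit_box_measure)
  then have "cbox 0 (One::'a) - box 0 One \<in> null_sets lborel"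
    by (subst null_sets_def) (auto simp: emeasure_Diff box_subset_cbox unit_box_measure)
  from AE_not_in[OF this] show ?thesis
    by eventually_elim (use box_subset_cbox in auto)
qed

lemma unit_box_integral:
  fixes f :: "'a::euclidean_space \<Rightarrow> real"
  assumes "set_borel_measurable lborel (box 0 One) f" "set_borel_measurable lborel (cbox 0 One) f"
  shows "(LINT t:box 0 One|lborel. f t) = (LINT t:cbox 0 One|lborel. f t)"
  by (rule set_integral_cong_set[OF assms(2,1)]) (use unit_box_AE in \<open>auto elim!: AE_mp\<close>)

lemma cont_to_L1:
  fixes \<nu> :: "('x::euclidean_space \<times> 'y::euclidean_space) measure"
    and psi :: "'x \<times> 'y \<Rightarrow> real" and phi :: "'y \<Rightarrow> real" and b :: "'y \<Rightarrow> 'x"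
  assumes nu: "prob_space \<nu>" "sets \<nu> = sets borel" "compact (spt \<nu>)"
    and cont: "continuous_on (spt \<nu>) psi" "continuous_on (cbox 0 One) phi" "continuous_on (cbox 0 One) b"
    and ok: "\<forall>z\<in>spt \<nu>. \<forall>t\<in>cbox 0 One. dual_ok z (psi z) (phi t) (b t) t"
  shows "\<exists>psi' phi' (b' :: 'y \<Rightarrow> 'x).
      psi' \<in> borel_measurable borel \<and> integrable \<nu> psi' \<and>
      phi' \<in> borel_measurable borel \<and> set_integrable lborel (box 0 One) phi' \<and>
      b' \<in> borel_measurable borel \<and> set_integrable lborel (box 0 One) b' \<and>
      (AE t in lborel. t \<in> box 0 One \<longrightarrow> (\<forall>z\<in>spt \<nu>. dual_ok z (psi' z) (phi' t) (b' t) t)) \<and>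
      (LINT z:spt \<nu>|\<nu>. psi' z) + (LINT t:box 0 One|lborel. phi' t)
        = (LINT z:spt \<nu>|\<nu>. psi z) + (LINT t:cbox 0 One|lborel. phi t)"
proof -
  define S where "S = spt \<nu>"
  define C :: "'y set" where "C = cbox 0 One"
  interpret P: prob_space \<nu> by (rule nu(1))
  have fin: "finite_measure \<nu>" by (simp add: P.finite_measure_axioms)
  have Sb: "S \<in> sets borel" unfolding S_def using nu(3) compact_imp_closed borel_closed by blast
  have Cb: "C \<in> sets borel" unfolding C_def by simp
  define psi' where "psi' = (\<lambda>z. indicator S z *\<^sub>R psi z)"
  define phi' where "phi' = (\<lambda>t. indicator C t *\<^sub>R phi t)"
  define b' where "b' = (\<lambda>t. indicator C t *\<^sub>R b t)"
  have m1: "psi' \<in> borel_measurable borel"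
    unfolding psi'_def using borel_measurable_continuous_on_indicator[OF Sb] cont(1) S_def by blast
  have m2: "phi' \<in> borel_measurable borel"
    unfolding phi'_def using borel_measurable_continuous_on_indicator[OF Cb] cont(2) C_def by blast
  have m3: "b' \<in> borel_measurable borel"
    unfolding b'_def using borel_measurable_continuous_on_indicator[OF Cb] cont(3) C_def by blast
  have i1: "set_integrable \<nu> S psi"
    by (rule cont_set_integrable[OF fin nu(2)]) (use nu cont in \<open>auto simp: S_def\<close>)
  then have i1': "integrable \<nu> psi'" unfolding set_integrable_def psi'_def .
  have ip: "integrable lborel phi'" unfolding phi'_def C_def
    by (rule borel_integrable_compact) (use cont in auto)
  have ib: "integrable lborel b'" unfolding b'_def C_def
    by (rule borel_integrable_compact) (use cont in auto)
  have i2: "set_integrable lborel (box 0 One) phi'"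
    unfolding set_integrable_def by (rule integrable_mult_indicator[OF _ ip]) simp
  have i3: "set_integrable lborel (box 0 One) b'"
    unfolding set_integrable_def by (rule integrable_mult_indicator[OF _ ib]) simp
  have ae: "AE t in lborel. t \<in> box 0 One \<longrightarrow> (\<forall>z\<in>spt \<nu>. dual_ok z (psi' z) (phi' t) (b' t) t)"
  proof (rule AE_I2, intro impI ballI)
    fix t :: 'y and z assume t: "t \<in> box 0 One" and z: "z \<in> spt \<nu>"
    then have "t \<in> C" using box_subset_cbox C_def by blast
    then show "dual_ok z (psi' z) (phi' t) (b' t) t"
      using ok z unfolding psi'_def phi'_def b'_def S_def C_def by auto
  qed
  have e1: "(LINT z:spt \<nu>|\<nu>. psi' z) = (LINT z:spt \<nu>|\<nu>. psi z)"
    by (rule set_lebesgue_integral_cong) (use Sb nu(2) in \<open>auto simp: psi'_def S_def\<close>)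
  have e2: "(LINT t:box 0 One|lborel. phi' t) = (LINT t:cbox 0 One|lborel. phi' t)"
    by (rule unit_box_integral) (use m2 in \<open>auto simp: set_borel_measurable_def\<close>)
  have e3: "(LINT t:cbox 0 One|lborel. phi' t) = (LINT t:cbox 0 One|lborel. phi t)"
    by (rule set_lebesgue_integral_cong) (auto simp: phi'_def C_def)
  show ?thesis
    by (intro exI[of _ psi'] exI[of _ phi'] exI[of _ b'] conjI m1 m2 m3 i1' i2 i3 ae)
       (simp add: e1 e2 e3)
qed


lemma continuous_on_Max_fin:
  fixes f :: "'i \<Rightarrow> 'a::topological_space \<Rightarrow> real"
  assumes "finite I" "I \<noteq> {}" "\<And>i. i \<in> I \<Longrightarrow> continuous_on S (f i)"
  shows "continuous_on S (\<lambda>x. Max ((\<lambda>i. f i x) ` I))"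
  using assms
proof (induction I rule: finite_ne_induct)
  case (singleton i)
  then show ?case by simp
next
  case (insert i F)
  have "continuous_on S (\<lambda>x. max (f i x) (Max ((\<lambda>i. f i x) ` F)))"
    using insert by (intro continuous_on_max) auto
  moreover have "\<And>x. Max ((\<lambda>i. f i x) ` insert i F) = max (f i x) (Max ((\<lambda>i. f i x) ` F))"
    using insert by (simp add: Max_insert)
  ultimately show ?case by simp
qed

lemma SUP_diff_le:
  fixes F G :: "'z \<Rightarrow> real"
  assumes "Z \<noteq> {}" "bdd_above (F ` Z)" "bdd_above (G ` Z)" "\<And>z. z \<in> Z \<Longrightarrow> \<bar>F z - G z\<bar> \<le> w"
  shows "\<bar>Sup (F ` Z) - Sup (G ` Z)\<bar> \<le> w"
proof -
  have 1: "Sup (F ` Z) \<le> Sup (G ` Z) + w"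
  proof (rule cSUP_least[OF assms(1)])
    fix z assume z: "z \<in> Z"
    have "G z \<le> Sup (G ` Z)" by (rule cSUP_upper[OF z assms(3)])
    then show "F z \<le> Sup (G ` Z) + w" using assms(4)[OF z] by linarith
  qed
  have 2: "Sup (G ` Z) \<le> Sup (F ` Z) + w"
  proof (rule cSUP_least[OF assms(1)])
    fix z assume z: "z \<in> Z"
    have "F z \<le> Sup (F ` Z)" by (rule cSUP_upper[OF z assms(2)])
    then show "G z \<le> Sup (F ` Z) + w" using assms(4)[OF z] by linarith
  qed
  from 1 2 show ?thesis by linarith
qed

lemma unit_cells:
  fixes \<eta> :: real
  assumes "\<eta> > 0"
  obtains n and D :: "nat \<Rightarrow> 'y::euclidean_space set" and c :: "nat \<Rightarrow> 'y"
  where "\<And>j. j < n \<Longrightarrow> D j \<in> sets lborel" "\<And>j. j < n \<Longrightarrow> D j \<subseteq> box 0 One"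
    "\<And>j t. j < n \<Longrightarrow> t \<in> D j \<Longrightarrow> norm (t - c j) \<le> \<eta>"
    "disjoint_family_on D {..<n}" "(\<Union>j\<in>{..<n}. D j) = box 0 One"
proof -
  have "cbox 0 (One::'y) \<subseteq> (\<Union>c\<in>cbox 0 One. ball c \<eta>)"
    using assms by (auto intro: bexI[of _ "x" for x])
  then obtain F where F: "F \<subseteq> cbox 0 One" "finite F" "cbox 0 (One::'y) \<subseteq> (\<Union>c\<in>F. ball c \<eta>)"
    using compactE_image[OF compact_cbox, of "cbox 0 One" "\<lambda>c. ball c \<eta>"] by blast
  obtain cs where cs: "set cs = F" using finite_list[OF F(2)] by blast
  define n where "n = length cs"
  define c where "c j = cs ! j" for j
  define D where "D j = box 0 One \<inter> ball (c j) \<eta> - (\<Union>k\<in>{..<j}. ball (c k) \<eta>)" for j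
  show ?thesis
  proof (rule that[of n D c])
    fix j assume "j < n"
    show "D j \<in> sets lborel" unfolding D_def by auto
    show "D j \<subseteq> box 0 One" unfolding D_def by auto
    fix t assume "t \<in> D j"
    then show "norm (t - c j) \<le> \<eta>" unfolding D_def by (auto simp: dist_norm norm_minus_commute)
  next
    show "disjoint_family_on D {..<n}"
      unfolding disjoint_family_on_def D_def
      by (auto simp: linorder_neq_iff)
  next
    show "(\<Union>j\<in>{..<n}. D j) = box 0 One"
    proof
      show "(\<Union>j\<in>{..<n}. D j) \<subseteq> box 0 One" unfolding D_def by auto
      show "box 0 One \<subseteq> (\<Union>j\<in>{..<n}. D j)"
      proof
        fix t :: 'y assume t: "t \<in> box 0 One"
        then have "t \<in> cbox 0 One" using box_subset_cbox by blast
        then obtain a where "a \<in> F" "t \<in> ball a \<eta>" using F(3) by blast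
        then obtain i where i: "i < n" "t \<in> ball (c i) \<eta>"
          using cs unfolding n_def c_def by (metis in_set_conv_nth)
        define j where "j = (LEAST j. t \<in> ball (c j) \<eta>)"
        have j1: "t \<in> ball (c j) \<eta>" unfolding j_def by (rule LeastI[of _ i]) (use i in auto)
        have j2: "j \<le> i" unfolding j_def by (rule Least_le) (use i in auto)
        have j3: "\<And>k. k < j \<Longrightarrow> t \<notin> ball (c k) \<eta>" unfolding j_def using not_less_Least by blast
        show "t \<in> (\<Union>j\<in>{..<n}. D j)"
          using j1 j2 j3 i t unfolding D_def by (intro UN_I[of j]) auto
      qed
    qed
  qed
qed

lemma set_integral_const_real:
  assumes "A \<in> sets M" "emeasure M A < \<infinity>"
  shows "set_integrable M A (\<lambda>_. c::real)" "(LINT x:A|M. c) = c * measure M A"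
proof -
  show "set_integrable M A (\<lambda>_. c::real)"
    unfolding set_integrable_def using assms by (simp add: integrable_real_indicator)
  show "(LINT x:A|M. c) = c * measure M A"
    unfolding set_lebesgue_integral_def using assms(1) by (simp add: Int_absorb2 sets.sets_into_space)
qed

lemma set_integral_inner_left:
  fixes b :: "'a \<Rightarrow> 'x::euclidean_space"
  assumes "set_integrable M A b"
  shows "set_integrable M A (\<lambda>t. b t \<bullet> x)" "(LINT t:A|M. b t \<bullet> x) = (LINT t:A|M. b t) \<bullet> x"
proof -
  have eq: "(\<lambda>t. indicator A t *\<^sub>R (b t \<bullet> x)) = (\<lambda>t. (indicator A t *\<^sub>R b t) \<bullet> x)"
    by (auto simp: indicator_def)
  show "set_integrable M A (\<lambda>t. b t \<bullet> x)"
    unfolding set_integrable_def eq using assms[unfolded set_integrable_def] by (rule integrable_inner_left)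
  show "(LINT t:A|M. b t \<bullet> x) = (LINT t:A|M. b t) \<bullet> x"
    unfolding set_lebesgue_integral_def eq using assms[unfolded set_integrable_def]
    by (rule integral_inner_left)
qed

lemma cell_average:
  fixes phi :: "'y::euclidean_space \<Rightarrow> real" and b :: "'y \<Rightarrow> 'x::euclidean_space"
    and D :: "'y set" and p :: real and x :: 'x
  assumes D: "D \<in> sets lborel" "measure lborel D > 0" "emeasure lborel D < \<infinity>"
    and int: "set_integrable lborel D phi" "set_integrable lborel D b"
    and ae: "AE t in lborel. t \<in> D \<longrightarrow> p + phi t + b t \<bullet> x \<ge> t \<bullet> y"
    and near: "\<And>t. t \<in> D \<Longrightarrow> norm (t - c) \<le> \<eta>"
  shows "c \<bullet> y - (LINT t:D|lborel. phi t) / measure lborel D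
           - ((1 / measure lborel D) *\<^sub>R (LINT t:D|lborel. b t)) \<bullet> x \<le> p + \<eta> * norm y"
proof -
  define m where "m = measure lborel D"
  have m: "m > 0" using D(2) m_def by simp
  note c1 = set_integral_const_real[OF D(1,3)]
  note bi = set_integral_inner_left[OF int(2), of x]
  have i2: "set_integrable lborel D (\<lambda>t. p + phi t + b t \<bullet> x)"
    by (intro set_integral_add(1) c1(1) int(1) bi(1))
  have "(LINT t:D|lborel. c \<bullet> y - \<eta> * norm y) \<le> (LINT t:D|lborel. p + phi t + b t \<bullet> x)"
  proof (rule set_integral_mono_AE[OF c1(1) i2])
    show "AE t\<in>D in lborel. c \<bullet> y - \<eta> * norm y \<le> p + phi t + b t \<bullet> x"
      using ae
    proof eventually_elim
      case (elim t)
      show ?case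
      proof
        assume t: "t \<in> D"
        have "(c - t) \<bullet> y \<le> norm (c - t) * norm y" by (rule norm_cauchy_schwarz)
        also have "\<dots> \<le> \<eta> * norm y" using near[OF t] by (intro mult_right_mono) (auto simp: norm_minus_commute)
        finally show "c \<bullet> y - \<eta> * norm y \<le> p + phi t + b t \<bullet> x"
          using elim t by (simp add: inner_diff_left)
      qed
    qed
  qed
  also have "(LINT t:D|lborel. p + phi t + b t \<bullet> x)
      = p * m + (LINT t:D|lborel. phi t) + (LINT t:D|lborel. b t) \<bullet> x"
    using c1 int bi by (simp add: set_integral_add m_def)
  finally have "(c \<bullet> y - \<eta> * norm y) * m \<le> p * m + (LINT t:D|lborel. phi t) + (LINT t:D|lborel. b t) \<bullet> x"
    using c1(2)[of "c \<bullet> y - \<eta> * norm y"] m_def by simp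
  then have "c \<bullet> y - \<eta> * norm y \<le> p + (LINT t:D|lborel. phi t) / m + ((1/m) *\<^sub>R (LINT t:D|lborel. b t)) \<bullet> x"
    using m by (simp add: field_simps)
  then show ?thesis unfolding m_def by simp
qed

lemma L1_to_cont:
  fixes \<nu> :: "('x::euclidean_space \<times> 'y::euclidean_space) measure"
    and psi :: "'x \<times> 'y \<Rightarrow> real" and phi :: "'y \<Rightarrow> real" and b :: "'y \<Rightarrow> 'x"
  assumes nu: "prob_space \<nu>" "sets \<nu> = sets borel" "compact (spt \<nu>)"
    and hyp: "psi \<in> borel_measurable borel" "integrable \<nu> psi"
      "phi \<in> borel_measurable borel" "set_integrable lborel (box 0 One) phi"
      "b \<in> borel_measurable borel" "set_integrable lborel (box 0 One) b"
    and ok: "AE t in lborel. t \<in> box 0 One \<longrightarrow> (\<forall>z\<in>spt \<nu>. dual_ok z (psi z) (phi t) (b t) t)"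
    and e: "e > 0"
  shows "\<exists>psi' phi' (b' :: 'y \<Rightarrow> 'x). continuous_on (spt \<nu>) psi' \<and>
      continuous_on (cbox 0 One) phi' \<and> continuous_on (cbox 0 One) b' \<and>
      (\<forall>z\<in>spt \<nu>. \<forall>t\<in>cbox 0 One. dual_ok z (psi' z) (phi' t) (b' t) t) \<and>
      (LINT z:spt \<nu>|\<nu>. psi' z) + (LINT t:cbox 0 One|lborel. phi' t)
        \<le> (LINT z:spt \<nu>|\<nu>. psi z) + (LINT t:box 0 One|lborel. phi t) + e"
proof (cases "spt \<nu> = {}")
  case True
  define c0 where "c0 = (LINT t:box 0 One|lborel. phi t)"
  have "(LINT t:cbox 0 (One::'y)|lborel. c0) = c0"
    using set_integral_const_real(2)[of "cbox 0 (One::'y)" lborel c0] by (simp add: unit_box_measure)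
  then show ?thesis using True e
    by (intro exI[of _ "\<lambda>_. 0"] exI[of _ "\<lambda>_. c0"] exI[of _ "\<lambda>_. (0::'x)"] conjI)
       (auto simp: c0_def set_lebesgue_integral_def)
next
  case False
  define S where "S = spt \<nu>"
  define Q :: "'y set" where "Q = box 0 One"
  define C :: "'y set" where "C = cbox 0 One"
  have Sne: "S \<noteq> {}" using False S_def by simp
  interpret P: prob_space \<nu> by (rule nu(1))
  have fin: "finite_measure \<nu>" by (simp add: P.finite_measure_axioms)
  have Sb: "S \<in> sets borel" unfolding S_def using nu(3) compact_imp_closed borel_closed by blast
  have Snu: "S \<in> sets \<nu>" using Sb nu(2) by simp
  have Scomp: "compact S" using nu(3) S_def by simp
  obtain R where R: "R \<ge> 0" "\<And>z. z \<in> S \<Longrightarrow> norm z \<le> R"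
    using spt_bounded[OF nu(3)] unfolding S_def by blast
  have Rx: "norm (fst z) \<le> R" "norm (snd z) \<le> R" if "z \<in> S" for z
    using R(2)[OF that] norm_fst_le[of "fst z" "snd z"] norm_snd_le[of "snd z" "fst z"] by simp_all
  define \<eta> where "\<eta> = e / (4 * (R + 1))"
  have \<eta>: "\<eta> > 0" unfolding \<eta>_def using e R by simp
  have \<eta>R: "2 * (\<eta> * R) \<le> e / 2"
  proof -
    have "\<eta> * (R + 1) = e / 4" unfolding \<eta>_def using R(1) by (simp add: field_simps)
    then have "\<eta> * R \<le> e / 4" using \<eta> by (simp add: algebra_simps)
    then show ?thesis by simp
  qed
  obtain n and D :: "nat \<Rightarrow> 'y set" and c :: "nat \<Rightarrow> 'y" where cells:
    "\<And>j. j < n \<Longrightarrow> D j \<in> sets lborel" "\<And>j. j < n \<Longrightarrow> D j \<subseteq> Q"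
    "\<And>j t. j < n \<Longrightarrow> t \<in> D j \<Longrightarrow> norm (t - c j) \<le> \<eta>"
    "disjoint_family_on D {..<n}" "(\<Union>j\<in>{..<n}. D j) = Q"
    using unit_cells[OF \<eta>] unfolding Q_def by metis
  have Qm: "Q \<in> sets lborel" "emeasure lborel Q < \<infinity>" "measure lborel Q = 1"
    unfolding Q_def by (auto simp: unit_box_measure)
  have Dfin: "emeasure lborel (D j) < \<infinity>" if "j < n" for j
    using emeasure_mono[OF cells(2)[OF that] Qm(1)] Qm(2) by (meson le_less_trans)
  have phiQ: "set_integrable lborel Q phi" "set_integrable lborel Q b" using hyp Q_def by auto
  have phiD: "set_integrable lborel (D j) phi" "set_integrable lborel (D j) b" if "j < n" for j
    using set_integrable_subset[OF phiQ(1) cells(1,2)[OF that]]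
      set_integrable_subset[OF phiQ(2) cells(1,2)[OF that]] by auto
  define m where "m j = measure lborel (D j)" for j
  define J where "J = {j. j < n \<and> m j > 0}"
  have finJ: "finite J" unfolding J_def by simp
  have Jn: "J \<subseteq> {..<n}" unfolding J_def by auto
  define A where "A j = (LINT t:D j|lborel. phi t) / m j" for j
  define B where "B j = (1 / m j) *\<^sub>R (LINT t:D j|lborel. b t)" for j
  have avg: "c j \<bullet> snd z - A j - B j \<bullet> fst z \<le> psi z + \<eta> * R" if j: "j \<in> J" and z: "z \<in> S" for j z
  proof -
    have jn: "j < n" and mj: "m j > 0" using j J_def by auto
    have "c j \<bullet> snd z - A j - B j \<bullet> fst z \<le> psi z + \<eta> * norm (snd z)"
      unfolding A_def B_def m_def
    proof (rule cell_average[OF cells(1)[OF jn] _ Dfin[OF jn] phiD[OF jn]])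
      show "0 < measure lborel (D j)" using mj m_def by simp
      show "\<And>t. t \<in> D j \<Longrightarrow> norm (t - c j) \<le> \<eta>" using cells(3)[OF jn] .
      show "AE t in lborel. t \<in> D j \<longrightarrow> t \<bullet> snd z \<le> psi z + phi t + b t \<bullet> fst z"
        using ok
      proof eventually_elim
        case (elim t)
        show ?case
        proof
          assume "t \<in> D j"
          then have "t \<in> box 0 One" using cells(2)[OF jn] Q_def by auto
          then show "t \<bullet> snd z \<le> psi z + phi t + b t \<bullet> fst z"
            using elim z S_def unfolding dual_ok_def by auto
        qed
      qed
    qed
    also have "\<dots> \<le> psi z + \<eta> * R" using Rx(2)[OF z] \<eta> by (simp add: mult_left_mono)
    finally show ?thesis .
  qed
  have sumQ: "(LINT t:Q|lborel. f t) = (\<Sum>j<n. LINT t:D j|lborel. f t)"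
    if f: "set_integrable lborel Q f" for f :: "'y \<Rightarrow> real"
  proof -
    have "(LINT t:(\<Union>j\<in>{..<n}. D j)|lborel. f t) = (\<Sum>j\<in>{..<n}. LINT t:D j|lborel. f t)"
      by (rule set_integral_finite_Union)
         (use cells f in \<open>auto intro: set_integrable_subset\<close>)
    then show ?thesis using cells(5) by simp
  qed
  have nullD: "(LINT t:D j|lborel. f t) = 0" if "j < n" "j \<notin> J" for j and f :: "'y \<Rightarrow> real"
  proof -
    have "\<not> m j > 0" using that J_def by auto
    moreover have "m j \<ge> 0" unfolding m_def by simp
    ultimately have "m j = 0" by linarith
    then have "emeasure lborel (D j) = 0"
      using Dfin[OF that(1)] m_def by (simp add: emeasure_eq_ennreal_measure less_top)
    then have "D j \<in> null_sets lborel" using cells(1)[OF that(1)] by auto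
    then have "AE t in lborel. indicator (D j) t *\<^sub>R f t = 0"
      by (rule AE_mp[OF AE_not_in]) (auto intro!: AE_I2 simp: indicator_def)
    then show ?thesis unfolding set_lebesgue_integral_def by (rule integral_eq_zero_AE)
  qed
  have sumJ: "(LINT t:Q|lborel. f t) = (\<Sum>j\<in>J. LINT t:D j|lborel. f t)"
    if f: "set_integrable lborel Q f" for f :: "'y \<Rightarrow> real"
    unfolding sumQ[OF f] by (rule sum.mono_neutral_right) (use Jn nullD in auto)
  have mQ: "(\<Sum>j\<in>J. m j) = 1"
  proof -
    have "measure lborel (\<Union>j\<in>{..<n}. D j) = (\<Sum>j\<in>{..<n}. measure lborel (D j))"
      by (rule measure_finite_Union) (use cells Dfin in \<open>auto simp: less_top\<close>)
    then have "(\<Sum>j<n. m j) = 1" using cells(5) Qm(3) m_def by simp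
    moreover have "(\<Sum>j<n. m j) = (\<Sum>j\<in>J. m j)"
      by (rule sum.mono_neutral_right) (use Jn in \<open>auto simp: J_def m_def less_le\<close>)
    ultimately show ?thesis by simp
  qed
  have Jne: "J \<noteq> {}" using mQ by auto
  have mpos: "j \<in> J \<Longrightarrow> m j > 0" for j using J_def by auto
  have jn: "j \<in> J \<Longrightarrow> j < n" for j using J_def by auto
  define psih where "psih z = Max ((\<lambda>j. c j \<bullet> snd z - A j - B j \<bullet> fst z) ` J)" for z
  have psih_cont: "continuous_on S psih"
    unfolding psih_def by (rule continuous_on_Max_fin[OF finJ Jne]) (intro continuous_intros)
  have psih_ge: "c j \<bullet> snd z - A j - B j \<bullet> fst z \<le> psih z" if "j \<in> J" for j z
    unfolding psih_def using finJ that by (intro Max_ge) auto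
  have psih_le: "psih z \<le> psi z + \<eta> * R" if "z \<in> S" for z
    unfolding psih_def using finJ Jne avg[OF _ that] by (subst Max_le_iff) auto
  obtain M\<psi> where M\<psi>: "M\<psi> \<ge> 0" "\<And>z. z \<in> S \<Longrightarrow> \<bar>psih z\<bar> \<le> M\<psi>"
  proof -
    obtain M where "\<And>z. z \<in> S \<Longrightarrow> norm (psih z) \<le> M"
      using compact_imp_bounded[OF compact_continuous_image[OF psih_cont Scomp]]
      unfolding bounded_iff by auto
    then show ?thesis using that[of "max M 0"] by force
  qed
  define Mb where "Mb = (\<Sum>j\<in>J. norm (B j))"
  have Mb: "Mb \<ge> 0" "\<And>j. j \<in> J \<Longrightarrow> norm (B j) \<le> Mb"
    unfolding Mb_def using finJ by (auto intro: sum_nonneg member_le_sum)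
  obtain Ms where Ms: "Ms \<ge> 0" "\<And>s. s \<in> C \<Longrightarrow> norm s \<le> Ms"
  proof -
    obtain M where "\<And>s. s \<in> C \<Longrightarrow> norm s \<le> M"
      using bounded_cbox[of 0 "One::'y"] unfolding bounded_iff C_def by auto
    then show ?thesis using that[of "max M 0"] by force
  qed
  define K where "K = Ms * R + Mb * R + M\<psi>"
  have K: "K \<ge> 0" unfolding K_def using Ms Mb R M\<psi> by simp
  define L1 where "L1 = (LINT t:Q|lborel. \<bar>phi t\<bar>)"
  have L1: "L1 \<ge> 0" unfolding L1_def set_lebesgue_integral_def
    by (rule integral_nonneg_AE) (auto simp: indicator_def)
  define \<theta> where "\<theta> = e / (4 * (L1 + K + 1))"
  have \<theta>: "\<theta> > 0" "\<theta> * (L1 + K) \<le> e / 4"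
  proof -
    show "\<theta> > 0" unfolding \<theta>_def using e L1 K by simp
    have "\<theta> * (L1 + K + 1) = e / 4" unfolding \<theta>_def using L1 K by (simp add: field_simps)
    then show "\<theta> * (L1 + K) \<le> e / 4" using \<open>\<theta> > 0\<close> by (simp add: algebra_simps)
  qed
  have inner: "\<exists>T. compact T \<and> T \<subseteq> D j \<and> T \<in> sets lborel \<and> measure lborel (D j - T) < \<theta> * m j"
    if j: "j \<in> J" for j
  proof -
    have "D j \<in> sets lebesgue" using cells(1)[OF jn[OF j]] by simp
    moreover have "\<theta> * m j > 0" using \<theta> mpos[OF j] by simp
    ultimately obtain T where T: "closed T" "T \<subseteq> D j" "D j - T \<in> lmeasurable"
        "emeasure lebesgue (D j - T) < ennreal (\<theta> * m j)"
      using sets_lebesgue_inner_closed by metis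
    have Tb: "T \<in> sets lborel" using T(1) borel_closed by simp
    have DT: "D j - T \<in> sets lborel" using Tb cells(1)[OF jn[OF j]] by auto
    have "measure lebesgue (D j - T) < \<theta> * m j"
      using T(3,4) \<open>\<theta> * m j > 0\<close>
      by (metis emeasure_eq_measure2 ennreal_less_iff measure_nonneg)
    then have "measure lborel (D j - T) < \<theta> * m j" using DT by simp
    moreover have "compact T"
      using T(1,2) cells(2)[OF jn[OF j]] bounded_subset[of Q T] unfolding Q_def
      by (metis bounded_box compact_eq_bounded_closed order_trans)
    ultimately show ?thesis using T(2) Tb by blast
  qed
  then obtain KK where KK: "\<And>j. j \<in> J \<Longrightarrow> compact (KK j) \<and> KK j \<subseteq> D j \<and> KK j \<in> sets lborel
      \<and> measure lborel (D j - KK j) < \<theta> * m j"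
    by metis
  have KKdisj: "KK i \<inter> KK j = {}" if "i \<in> J" "j \<in> J" "i \<noteq> j" for i j
  proof -
    have "D i \<inter> D j = {}" using cells(4) that jn unfolding disjoint_family_on_def by blast
    then show ?thesis using KK that by blast
  qed
  have KKC: "KK j \<subseteq> C" if "j \<in> J" for j
    using KK[OF that] cells(2)[OF jn[OF that]] box_subset_cbox unfolding Q_def C_def by blast
  define U0 where "U0 = (\<Union>j\<in>J. KK j)"
  have U0c: "closed U0" unfolding U0_def using finJ KK compact_imp_closed by blast
  define f0 where "f0 s = (\<Sum>j\<in>J. indicator (KK j) s *\<^sub>R B j)" for s
  have f0_eq: "f0 s = B j" if j: "j \<in> J" and s: "s \<in> KK j" for j s
  proof -
    have "f0 s = indicator (KK j) s *\<^sub>R B j" unfolding f0_def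
    proof (rule sum.remove[OF finJ j, THEN trans])
      have "(\<Sum>i\<in>J - {j}. indicator (KK i) s *\<^sub>R B i) = 0"
        using KKdisj[OF _ j] s by (intro sum.neutral) (auto simp: indicator_def)
      then show "indicator (KK j) s *\<^sub>R B j + (\<Sum>i\<in>J - {j}. indicator (KK i) s *\<^sub>R B i) = indicator (KK j) s *\<^sub>R B j"
        by simp
    qed
    then show ?thesis using s by simp
  qed
  have f0_cont: "continuous_on U0 f0"
    unfolding U0_def
  proof (rule continuous_on_closed_Union[OF finJ])
    fix j assume j: "j \<in> J"
    show "closed (KK j)" using KK[OF j] compact_imp_closed by blast
    have "continuous_on (KK j) (\<lambda>_. B j)" by simp
    then show "continuous_on (KK j) f0" using f0_eq[OF j] continuous_on_cong by (metis (no_types, lifting))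
  qed
  have f0_bd: "norm (f0 s) \<le> Mb" if s: "s \<in> U0" for s
  proof -
    obtain j where j: "j \<in> J" "s \<in> KK j" using s unfolding U0_def by blast
    show ?thesis using f0_eq[OF j] Mb(2)[OF j(1)] by simp
  qed
  have cl: "closedin (top_of_set UNIV) U0" using U0c by simp
  obtain bh :: "'y \<Rightarrow> 'x" where bh0: "continuous_on UNIV bh" "\<And>x. x \<in> U0 \<Longrightarrow> bh x = f0 x"
      "\<And>x. x \<in> UNIV \<Longrightarrow> norm (bh x) \<le> Mb"
  proof (rule Tietze[OF f0_cont cl Mb(1) f0_bd])
    fix g :: "'y \<Rightarrow> 'x" assume "continuous_on UNIV g" "\<And>x. x \<in> U0 \<Longrightarrow> g x = f0 x"
      "\<And>x. x \<in> UNIV \<Longrightarrow> norm (g x) \<le> Mb"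
    then show thesis by (rule that)
  qed
  have bh: "continuous_on UNIV bh" "\<And>s. s \<in> U0 \<Longrightarrow> bh s = f0 s" "\<And>s. norm (bh s) \<le> Mb"
    using bh0 by auto
  have bhK: "bh s = B j" if j: "j \<in> J" and s: "s \<in> KK j" for j s
  proof -
    have "s \<in> U0" using j s unfolding U0_def by blast
    then show ?thesis using bh(2) f0_eq[OF j s] by simp
  qed
  define F where "F s z = s \<bullet> snd z - bh s \<bullet> fst z - psih z" for s z
  define phih where "phih s = Sup (F s ` S)" for s
  have Fbd: "F s z \<le> norm s * R + Mb * R + M\<psi>" if z: "z \<in> S" for s z
  proof -
    have "s \<bullet> snd z \<le> norm s * norm (snd z)" by (rule norm_cauchy_schwarz)
    also have "\<dots> \<le> norm s * R" using Rx(2)[OF z] by (intro mult_left_mono) auto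
    finally have 1: "s \<bullet> snd z \<le> norm s * R" .
    have "- (bh s \<bullet> fst z) \<le> norm (bh s) * norm (fst z)"
      using norm_cauchy_schwarz[of "- bh s" "fst z"] by simp
    also have "\<dots> \<le> Mb * R" using Rx(1)[OF z] bh(3)[of s] Mb(1) by (intro mult_mono) auto
    finally have 2: "- (bh s \<bullet> fst z) \<le> Mb * R" .
    have 3: "- psih z \<le> M\<psi>" using M\<psi>(2)[OF z] by linarith
    show ?thesis unfolding F_def using 1 2 3 by linarith
  qed
  have bdd: "bdd_above (F s ` S)" for s
    using Fbd by (intro bdd_aboveI2) blast
  have phih_upper: "F s z \<le> phih s" if "z \<in> S" for s z
    unfolding phih_def by (rule cSUP_upper[OF that bdd])
  have phih_lip: "\<bar>phih s - phih s'\<bar> \<le> R * norm (s - s') + R * norm (bh s - bh s')" for s s'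
    unfolding phih_def
  proof (rule SUP_diff_le[OF Sne bdd bdd])
    fix z assume z: "z \<in> S"
    have "F s z - F s' z = (s - s') \<bullet> snd z - (bh s - bh s') \<bullet> fst z"
      unfolding F_def by (simp add: inner_diff_left)
    also have "\<bar>\<dots>\<bar> \<le> norm (s - s') * norm (snd z) + norm (bh s - bh s') * norm (fst z)"
      using Cauchy_Schwarz_ineq2[of "s - s'" "snd z"] Cauchy_Schwarz_ineq2[of "bh s - bh s'" "fst z"]
      by linarith
    also have "\<dots> \<le> R * norm (s - s') + R * norm (bh s - bh s')"
      using Rx[OF z] by (simp add: mult_right_mono mult.commute add_mono)
    finally show "\<bar>F s z - F s' z\<bar> \<le> R * norm (s - s') + R * norm (bh s - bh s')" .
  qed
  have phih_cont: "continuous_on UNIV phih"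
  proof (rule continuous_on_eq_continuous_at[THEN iffD2, OF open_UNIV], intro ballI)
    fix s :: 'y
    have bhc: "(bh \<longlongrightarrow> bh s) (at s)"
      using bh(1) by (simp add: continuous_on_eq_continuous_at isContD)
    have "((\<lambda>s'. R * norm (s' - s) + R * norm (bh s' - bh s)) \<longlongrightarrow> R * norm (s - s) + R * norm (bh s - bh s)) (at s)"
      by (intro tendsto_intros bhc)
    then have lim0: "((\<lambda>s'. R * norm (s' - s) + R * norm (bh s' - bh s)) \<longlongrightarrow> 0) (at s)" by simp
    have "((\<lambda>s'. phih s' - phih s) \<longlongrightarrow> 0) (at s)"
      by (rule Lim_null_comparison[OF _ lim0]) (use phih_lip in \<open>auto intro!: always_eventually\<close>)
    then show "isCont phih s" unfolding isCont_def by (simp add: Lim_null[symmetric])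
  qed
  have phih_K: "phih s \<le> K" if "s \<in> C" for s
    unfolding phih_def
  proof (rule cSUP_least[OF Sne])
    fix z assume "z \<in> S"
    then have "F s z \<le> norm s * R + Mb * R + M\<psi>" by (rule Fbd)
    also have "\<dots> \<le> K" unfolding K_def using Ms(2)[OF that] R(1) by (simp add: mult_right_mono)
    finally show "F s z \<le> K" .
  qed
  have phih_KK: "phih s \<le> A j + \<eta> * R" if j: "j \<in> J" and s: "s \<in> KK j" for j s
    unfolding phih_def
  proof (rule cSUP_least[OF Sne])
    fix z assume z: "z \<in> S"
    have sD: "s \<in> D j" using KK[OF j] s by blast
    have "(s - c j) \<bullet> snd z \<le> norm (s - c j) * norm (snd z)" by (rule norm_cauchy_schwarz)
    also have "\<dots> \<le> \<eta> * R" using cells(3)[OF jn[OF j] sD] Rx(2)[OF z] \<eta> by (intro mult_mono) auto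
    finally have 1: "(s - c j) \<bullet> snd z \<le> \<eta> * R" .
    have 2: "c j \<bullet> snd z - A j - B j \<bullet> fst z \<le> psih z" by (rule psih_ge[OF j])
    show "F s z \<le> A j + \<eta> * R" unfolding F_def bhK[OF j s] using 1 2 by (simp add: inner_diff_left)
  qed
  have okh: "dual_ok z (psih z) (phih t) (bh t) t" if "z \<in> S" for z t
    using phih_upper[OF that, of t] unfolding F_def dual_ok_def by simp
  have Sfin: "emeasure \<nu> S < \<infinity>"
    using finite_measure.emeasure_finite[OF fin, of S] by (simp add: less_top[symmetric])
  have ipsi: "set_integrable \<nu> S psi"
    unfolding set_integrable_def by (rule integrable_mult_indicator[OF Snu hyp(2)])
  have ipsih: "set_integrable \<nu> S psih" by (rule cont_set_integrable[OF fin nu(2) Scomp psih_cont])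
  have "(LINT z:S|\<nu>. psih z) \<le> (LINT z:S|\<nu>. psi z + \<eta> * R)"
    by (rule set_integral_mono[OF ipsih set_integral_add(1)[OF ipsi set_integral_const_real(1)[OF Snu Sfin]]])
       (rule psih_le)
  also have "\<dots> = (LINT z:S|\<nu>. psi z) + \<eta> * R * measure \<nu> S"
    by (rule set_integral_add_const[OF ipsi Snu Sfin])
  also have "\<dots> \<le> (LINT z:S|\<nu>. psi z) + \<eta> * R"
    using \<eta> R(1) P.prob_le_1[of S] by (simp add: mult_left_le)
  finally have Ipsi: "(LINT z:S|\<nu>. psih z) \<le> (LINT z:S|\<nu>. psi z) + \<eta> * R" .
  define mk where "mk j = measure lborel (KK j)" for j
  define I where "I j = (LINT t:D j|lborel. phi t)" for j
  define IA where "IA j = (LINT t:D j|lborel. \<bar>phi t\<bar>)" for j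
  have mkd: "m j - mk j < \<theta> * m j" "0 \<le> m j - mk j" if j: "j \<in> J" for j
  proof -
    have "measure lborel (D j - KK j) = m j - mk j"
      unfolding m_def mk_def
      by (rule measure_Diff) (use KK[OF j] cells(1)[OF jn[OF j]] Dfin[OF jn[OF j]] in \<open>auto simp: less_top\<close>)
    then show "m j - mk j < \<theta> * m j" "0 \<le> m j - mk j" using KK[OF j] measure_nonneg by (metis)+
  qed
  have AI: "A j * m j = I j" if "j \<in> J" for j using mpos[OF that] unfolding A_def I_def by simp
  have IIA: "\<bar>I j\<bar> \<le> IA j" for j
    unfolding I_def IA_def set_lebesgue_integral_def
    using integral_abs_bound[of lborel "\<lambda>t. indicator (D j) t *\<^sub>R phi t"]
    by (simp add: abs_mult)
  have perj: "(A j + \<eta> * R - K) * mk j \<le> I j + \<theta> * IA j + \<eta> * R * m j - K * m j + K * \<theta> * m j"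
    if j: "j \<in> J" for j
  proof -
    define d where "d = m j - mk j"
    have d: "0 \<le> d" "d < \<theta> * m j" using mkd[OF j] d_def by auto
    have mj: "m j > 0" using mpos[OF j] .
    have "- (A j * d) \<le> \<bar>A j\<bar> * d" using mult_right_mono[OF abs_ge_minus_self[of "A j"] d(1)] by simp
    also have "\<dots> \<le> \<bar>A j\<bar> * (\<theta> * m j)" using d by (intro mult_left_mono) auto
    also have "\<dots> = \<theta> * \<bar>I j\<bar>"
    proof -
      have "\<bar>I j\<bar> = \<bar>A j\<bar> * m j" using AI[OF j] mj by (metis abs_mult abs_of_pos)
      then show ?thesis by simp
    qed
    also have "\<dots> \<le> \<theta> * IA j" using IIA \<theta> by (intro mult_left_mono) auto
    finally have 1: "- (A j * d) \<le> \<theta> * IA j" .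
    have 2: "\<eta> * R * mk j \<le> \<eta> * R * m j" using d \<eta> R(1) d_def by (intro mult_left_mono) auto
    have 3: "K * d \<le> K * \<theta> * m j" using mult_left_mono[of d "\<theta> * m j" K] d K by (simp add: mult.assoc)
    have "(A j + \<eta> * R - K) * mk j = A j * m j - A j * d + \<eta> * R * mk j - K * m j + K * d"
      unfolding d_def by (simp add: algebra_simps)
    then show ?thesis using 1 2 3 AI[OF j] by linarith
  qed
  have sumI: "(\<Sum>j\<in>J. I j) = (LINT t:Q|lborel. phi t)" unfolding I_def by (rule sumJ[OF phiQ(1), symmetric])
  have sumIA: "(\<Sum>j\<in>J. IA j) = L1" unfolding IA_def L1_def
    by (rule sumJ[symmetric]) (rule set_integrable_abs[OF phiQ(1)])
  have sumG: "(\<Sum>j\<in>J. (A j + \<eta> * R - K) * mk j) \<le> (LINT t:Q|lborel. phi t) + \<theta> * L1 + \<eta> * R - K + K * \<theta>"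
  proof -
    have "(\<Sum>j\<in>J. (A j + \<eta> * R - K) * mk j)
        \<le> (\<Sum>j\<in>J. I j + \<theta> * IA j + \<eta> * R * m j - K * m j + K * \<theta> * m j)"
      by (rule sum_mono) (rule perj)
    also have "\<dots> = (\<Sum>j\<in>J. I j) + \<theta> * (\<Sum>j\<in>J. IA j) + \<eta> * R * (\<Sum>j\<in>J. m j) - K * (\<Sum>j\<in>J. m j)
        + K * \<theta> * (\<Sum>j\<in>J. m j)"
      by (simp add: sum.distrib sum_subtractf sum_distrib_left)
    finally show ?thesis unfolding sumI sumIA mQ by simp
  qed
  define G where "G s = K + (\<Sum>j\<in>J. indicator (KK j) s * (A j + \<eta> * R - K))" for s
  have G_ge: "phih s \<le> G s" if s: "s \<in> C" for s
  proof (cases "\<exists>j\<in>J. s \<in> KK j")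
    case True
    then obtain j where j: "j \<in> J" "s \<in> KK j" by blast
    have "(\<Sum>i\<in>J. indicator (KK i) s * (A i + \<eta> * R - K)) = indicator (KK j) s * (A j + \<eta> * R - K)"
    proof (rule sum.remove[OF finJ j(1), THEN trans])
      have "(\<Sum>i\<in>J - {j}. indicator (KK i) s * (A i + \<eta> * R - K)) = 0"
      proof (rule sum.neutral, rule ballI)
        fix i assume i: "i \<in> J - {j}"
        then have "s \<notin> KK i" using KKdisj[of i j] j by blast
        then show "indicator (KK i) s * (A i + \<eta> * R - K) = 0" by simp
      qed
      then show "indicator (KK j) s * (A j + \<eta> * R - K) + (\<Sum>i\<in>J - {j}. indicator (KK i) s * (A i + \<eta> * R - K))
          = indicator (KK j) s * (A j + \<eta> * R - K)" by simp
    qed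
    then have "G s = A j + \<eta> * R" unfolding G_def using j(2) by simp
    then show ?thesis using phih_KK[OF j] by simp
  next
    case False
    have "(\<Sum>i\<in>J. indicator (KK i) s * (A i + \<eta> * R - K)) = 0"
    proof (rule sum.neutral, rule ballI)
      fix i assume i: "i \<in> J"
      then have "s \<notin> KK i" using False by blast
      then show "indicator (KK i) s * (A i + \<eta> * R - K) = 0" by simp
    qed
    then have "G s = K" unfolding G_def by simp
    then show ?thesis using phih_K[OF s] by simp
  qed
  have eqG: "(\<lambda>s. indicator C s *\<^sub>R G s)
      = (\<lambda>s. K * indicator C s + (\<Sum>j\<in>J. (A j + \<eta> * R - K) * indicator (KK j) s))"
  proof
    fix s
    show "indicator C s *\<^sub>R G s = K * indicator C s + (\<Sum>j\<in>J. (A j + \<eta> * R - K) * indicator (KK j) s)"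
    proof (cases "s \<in> C")
      case True
      have "(\<Sum>j\<in>J. indicator (KK j) s * (A j + \<eta> * R - K)) = (\<Sum>j\<in>J. (A j + \<eta> * R - K) * indicator (KK j) s)"
        by (simp only: mult.commute)
      then show ?thesis unfolding G_def using True by simp
    next
      case False
      then have "\<And>j. j \<in> J \<Longrightarrow> s \<notin> KK j" using KKC by blast
      then show ?thesis using False by (simp add: indicator_def)
    qed
  qed
  have Cm: "C \<in> sets lborel" "emeasure lborel C < \<infinity>" "measure lborel C = 1"
    unfolding C_def by (auto simp: unit_box_measure)
  have KKm: "KK j \<in> sets lborel" "emeasure lborel (KK j) < \<infinity>" if "j \<in> J" for j
    using KK[OF that] emeasure_mono[OF KKC[OF that] Cm(1)] Cm(2) by (auto intro: le_less_trans)
  have intG: "integrable lborel (\<lambda>s. K * indicator C s + (\<Sum>j\<in>J. (A j + \<eta> * R - K) * indicator (KK j) s))"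
  proof (rule Bochner_Integration.integrable_add)
    show "integrable lborel (\<lambda>s. K * indicator C s)"
      by (rule Bochner_Integration.integrable_mult_right, rule integrable_real_indicator[OF Cm(1,2)])
    show "integrable lborel (\<lambda>s. \<Sum>j\<in>J. (A j + \<eta> * R - K) * indicator (KK j) s)"
    proof (rule Bochner_Integration.integrable_sum)
      fix j assume j: "j \<in> J"
      show "integrable lborel (\<lambda>s. (A j + \<eta> * R - K) * indicator (KK j) s)"
        by (rule Bochner_Integration.integrable_mult_right, rule integrable_real_indicator[OF KKm[OF j]])
    qed
  qed
  have IG: "(LINT s:C|lborel. G s) = K + (\<Sum>j\<in>J. (A j + \<eta> * R - K) * mk j)"
    unfolding set_lebesgue_integral_def eqG
    using Cm KKm intG by (simp add: Bochner_Integration.integral_add integrable_real_indicator mk_def)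
  have iphih: "set_integrable lborel C phih"
    unfolding set_integrable_def C_def
    by (rule borel_integrable_compact) (use phih_cont continuous_on_subset in auto)
  have iG: "set_integrable lborel C G" unfolding set_integrable_def eqG by (rule intG)
  have Iphi: "(LINT s:C|lborel. phih s) \<le> (LINT t:Q|lborel. phi t) + \<theta> * (L1 + K) + \<eta> * R"
  proof -
    have "(LINT s:C|lborel. phih s) \<le> (LINT s:C|lborel. G s)"
      by (rule set_integral_mono[OF iphih iG G_ge])
    then show ?thesis using IG sumG by (simp add: algebra_simps)
  qed
  show ?thesis
  proof (intro exI[of _ psih] exI[of _ phih] exI[of _ bh] conjI)
    show "continuous_on (spt \<nu>) psih" using psih_cont S_def by simp
    show "continuous_on (cbox 0 One) phih" using phih_cont continuous_on_subset by blast
    show "continuous_on (cbox 0 One) bh" using bh(1) continuous_on_subset by blast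
    show "\<forall>z\<in>spt \<nu>. \<forall>t\<in>cbox 0 One. dual_ok z (psih z) (phih t) (bh t) t"
      using okh S_def by blast
    show "(LINT z:spt \<nu>|\<nu>. psih z) + (LINT t:cbox 0 One|lborel. phih t)
        \<le> (LINT z:spt \<nu>|\<nu>. psi z) + (LINT t:box 0 One|lborel. phi t) + e"
      using Ipsi Iphi \<eta>R \<theta>(2) e unfolding S_def C_def Q_def by linarith
  qed
qed

lemma smooth_restr_cont:
  "smooth (\<Phi> :: 'a::euclidean_space \<Rightarrow> 'b::real_normed_vector) \<Longrightarrow> \<forall>t\<in>A. phi t = \<Phi> t \<Longrightarrow> continuous_on A phi"
  unfolding smooth_def
  by (metis Ck.simps(1) continuous_on_cong continuous_on_subset subset_UNIV)

lemma smooth_in_cont: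
  fixes \<nu> :: "('x::euclidean_space \<times> 'y::euclidean_space) measure"
    and psi :: "'x \<times> 'y \<Rightarrow> real" and phi :: "'y \<Rightarrow> real" and b :: "'y \<Rightarrow> 'x"
  assumes nu: "prob_space \<nu>" "sets \<nu> = sets borel" "compact (spt \<nu>)"
    and h: "continuous_on (spt \<nu>) psi" "smooth (\<Phi> :: 'y \<Rightarrow> real)" "\<forall>t\<in>cbox 0 One. phi t = \<Phi> t"
      "smooth (B :: 'y \<Rightarrow> 'x)" "\<forall>t\<in>cbox 0 One. b t = B t"
      "\<forall>z\<in>spt \<nu>. \<forall>t\<in>cbox 0 One. dual_ok z (psi z) (phi t) (b t) t"
  shows "ereal ((LINT z:spt \<nu>|\<nu>. psi z) + (LINT t:cbox 0 One|lborel. phi t)) \<in> {ereal ((LINT z:spt \<nu>|\<nu>. psi z) + (LINT t:cbox 0 One|lborel. phi t)) |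
      psi phi (b :: 'y \<Rightarrow> 'x).
      continuous_on (spt \<nu>) psi \<and> continuous_on (cbox 0 One) phi \<and> continuous_on (cbox 0 One) b \<and>
      (\<forall>z\<in>spt \<nu>. \<forall>t\<in>cbox 0 One. dual_ok z (psi z) (phi t) (b t) t)}"
proof -
  have "continuous_on (cbox 0 One) phi" "continuous_on (cbox 0 One) b"
    using smooth_restr_cont h(2,3,4,5) by blast+
  then show ?thesis
    by (rule_tac CollectI, rule_tac exI[of _ psi], rule_tac exI[of _ phi], rule_tac exI[of _ b], intro conjI refl h)
qed

lemma cont_in_L1:
  fixes \<nu> :: "('x::euclidean_space \<times> 'y::euclidean_space) measure"
    and psi :: "'x \<times> 'y \<Rightarrow> real" and phi :: "'y \<Rightarrow> real" and b :: "'y \<Rightarrow> 'x"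
  assumes nu: "prob_space \<nu>" "sets \<nu> = sets borel" "compact (spt \<nu>)"
    and cont: "continuous_on (spt \<nu>) psi" "continuous_on (cbox 0 One) phi" "continuous_on (cbox 0 One) b"
    and ok: "\<forall>z\<in>spt \<nu>. \<forall>t\<in>cbox 0 One. dual_ok z (psi z) (phi t) (b t) t"
  shows "ereal ((LINT z:spt \<nu>|\<nu>. psi z) + (LINT t:cbox 0 One|lborel. phi t)) \<in> {ereal ((LINT z:spt \<nu>|\<nu>. psi z) + (LINT t:box 0 One|lborel. phi t)) |
      psi phi (b :: 'y \<Rightarrow> 'x).
      psi \<in> borel_measurable borel \<and> integrable \<nu> psi \<and>
      phi \<in> borel_measurable borel \<and> set_integrable lborel (box 0 One) phi \<and>
      b \<in> borel_measurable borel \<and> set_integrable lborel (box 0 One) b \<and>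
      (AE t in lborel. t \<in> box 0 One \<longrightarrow> (\<forall>z\<in>spt \<nu>. dual_ok z (psi z) (phi t) (b t) t))}"
proof -
  obtain psi' phi' and b' :: "'y \<Rightarrow> 'x" where H:
      "psi' \<in> borel_measurable borel" "integrable \<nu> psi'"
      "phi' \<in> borel_measurable borel" "set_integrable lborel (box 0 One) phi'"
      "b' \<in> borel_measurable borel" "set_integrable lborel (box 0 One) b'"
      "(AE t in lborel. t \<in> box 0 One \<longrightarrow> (\<forall>z\<in>spt \<nu>. dual_ok z (psi' z) (phi' t) (b' t) t))"
      "(LINT z:spt \<nu>|\<nu>. psi' z) + (LINT t:box 0 One|lborel. phi' t)
        = (LINT z:spt \<nu>|\<nu>. psi z) + (LINT t:cbox 0 One|lborel. phi t)"
    using cont_to_L1[OF nu cont ok] by (elim exE conjE) (rule that; assumption)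
  show ?thesis
    by (rule CollectI, rule exI[of _ psi'], rule exI[of _ phi'], rule exI[of _ b'], intro conjI H(1-7))
       (simp only: H(8))
qed

lemma cont_approx_smooth:
  fixes \<nu> :: "('x::euclidean_space \<times> 'y::euclidean_space) measure"
    and psi :: "'x \<times> 'y \<Rightarrow> real" and phi :: "'y \<Rightarrow> real" and b :: "'y \<Rightarrow> 'x"
  assumes nu: "prob_space \<nu>" "sets \<nu> = sets borel" "compact (spt \<nu>)"
    and cont: "continuous_on (spt \<nu>) psi" "continuous_on (cbox 0 One) phi" "continuous_on (cbox 0 One) b"
    and ok: "\<forall>z\<in>spt \<nu>. \<forall>t\<in>cbox 0 One. dual_ok z (psi z) (phi t) (b t) t" and e: "e > 0"
  shows "\<exists>x\<in>{ereal ((LINT z:spt \<nu>|\<nu>. psi z) + (LINT t:cbox 0 One|lborel. phi t)) |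
      psi phi (b :: 'y \<Rightarrow> 'x).
      continuous_on (spt \<nu>) psi \<and>
      (\<exists>\<Phi>. smooth (\<Phi> :: 'y \<Rightarrow> real) \<and> (\<forall>t\<in>cbox 0 One. phi t = \<Phi> t)) \<and>
      (\<exists>B. smooth (B :: 'y \<Rightarrow> 'x) \<and> (\<forall>t\<in>cbox 0 One. b t = B t)) \<and>
      (\<forall>z\<in>spt \<nu>. \<forall>t\<in>cbox 0 One. dual_ok z (psi z) (phi t) (b t) t)}. x \<le> ereal ((LINT z:spt \<nu>|\<nu>. psi z) + (LINT t:cbox 0 One|lborel. phi t)) + ereal e"
proof -
  obtain psi' phi' and b' :: "'y \<Rightarrow> 'x" where H: "continuous_on (spt \<nu>) psi'"
      "(\<exists>\<Phi>. smooth (\<Phi> :: 'y \<Rightarrow> real) \<and> (\<forall>t\<in>cbox 0 One. phi' t = \<Phi> t))"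
      "(\<exists>B. smooth (B :: 'y \<Rightarrow> 'x) \<and> (\<forall>t\<in>cbox 0 One. b' t = B t))"
      "(\<forall>z\<in>spt \<nu>. \<forall>t\<in>cbox 0 One. dual_ok z (psi' z) (phi' t) (b' t) t)"
      "(LINT z:spt \<nu>|\<nu>. psi' z) + (LINT t:cbox 0 One|lborel. phi' t)
        \<le> (LINT z:spt \<nu>|\<nu>. psi z) + (LINT t:cbox 0 One|lborel. phi t) + e"
    using cont_to_smooth[OF nu cont ok e] by (elim exE conjE) (rule that; (assumption | blast))
  show ?thesis
  proof (rule bexI[of _ "ereal ((LINT z:spt \<nu>|\<nu>. psi' z) + (LINT t:cbox 0 One|lborel. phi' t))"])
    show "ereal ((LINT z:spt \<nu>|\<nu>. psi' z) + (LINT t:cbox 0 One|lborel. phi' t))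
      \<le> ereal ((LINT z:spt \<nu>|\<nu>. psi z) + (LINT t:cbox 0 One|lborel. phi t)) + ereal e"
      using H(5) by simp
    show "ereal ((LINT z:spt \<nu>|\<nu>. psi' z) + (LINT t:cbox 0 One|lborel. phi' t)) \<in> {ereal ((LINT z:spt \<nu>|\<nu>. psi z) + (LINT t:cbox 0 One|lborel. phi t)) |
      psi phi (b :: 'y \<Rightarrow> 'x).
      continuous_on (spt \<nu>) psi \<and>
      (\<exists>\<Phi>. smooth (\<Phi> :: 'y \<Rightarrow> real) \<and> (\<forall>t\<in>cbox 0 One. phi t = \<Phi> t)) \<and>
      (\<exists>B. smooth (B :: 'y \<Rightarrow> 'x) \<and> (\<forall>t\<in>cbox 0 One. b t = B t)) \<and>
      (\<forall>z\<in>spt \<nu>. \<forall>t\<in>cbox 0 One. dual_ok z (psi z) (phi t) (b t) t)}"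
      by (rule CollectI, rule exI[of _ psi'], rule exI[of _ phi'], rule exI[of _ b'], intro conjI refl H)
  qed
qed

lemma L1_approx_cont:
  fixes \<nu> :: "('x::euclidean_space \<times> 'y::euclidean_space) measure"
    and psi :: "'x \<times> 'y \<Rightarrow> real" and phi :: "'y \<Rightarrow> real" and b :: "'y \<Rightarrow> 'x"
  assumes nu: "prob_space \<nu>" "sets \<nu> = sets borel" "compact (spt \<nu>)"
    and hyp: "psi \<in> borel_measurable borel" "integrable \<nu> psi"
      "phi \<in> borel_measurable borel" "set_integrable lborel (box 0 One) phi"
      "b \<in> borel_measurable borel" "set_integrable lborel (box 0 One) b"
    and ok: "AE t in lborel. t \<in> box 0 One \<longrightarrow> (\<forall>z\<in>spt \<nu>. dual_ok z (psi z) (phi t) (b t) t)"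
    and e: "e > 0"
  shows "\<exists>x\<in>{ereal ((LINT z:spt \<nu>|\<nu>. psi z) + (LINT t:cbox 0 One|lborel. phi t)) |
      psi phi (b :: 'y \<Rightarrow> 'x).
      continuous_on (spt \<nu>) psi \<and> continuous_on (cbox 0 One) phi \<and> continuous_on (cbox 0 One) b \<and>
      (\<forall>z\<in>spt \<nu>. \<forall>t\<in>cbox 0 One. dual_ok z (psi z) (phi t) (b t) t)}. x \<le> ereal ((LINT z:spt \<nu>|\<nu>. psi z) + (LINT t:box 0 One|lborel. phi t)) + ereal e"
proof -
  obtain psi' phi' and b' :: "'y \<Rightarrow> 'x" where H: "continuous_on (spt \<nu>) psi'"
      "continuous_on (cbox 0 One) phi'" "continuous_on (cbox 0 One) b'"
      "(\<forall>z\<in>spt \<nu>. \<forall>t\<in>cbox 0 One. dual_ok z (psi' z) (phi' t) (b' t) t)"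
      "(LINT z:spt \<nu>|\<nu>. psi' z) + (LINT t:cbox 0 One|lborel. phi' t)
        \<le> (LINT z:spt \<nu>|\<nu>. psi z) + (LINT t:box 0 One|lborel. phi t) + e"
    using L1_to_cont[OF nu hyp ok e] by (elim exE conjE) (rule that; assumption)
  show ?thesis
  proof (rule bexI[of _ "ereal ((LINT z:spt \<nu>|\<nu>. psi' z) + (LINT t:cbox 0 One|lborel. phi' t))"])
    show "ereal ((LINT z:spt \<nu>|\<nu>. psi' z) + (LINT t:cbox 0 One|lborel. phi' t))
      \<le> ereal ((LINT z:spt \<nu>|\<nu>. psi z) + (LINT t:box 0 One|lborel. phi t)) + ereal e"
      using H(5) by simp
    show "ereal ((LINT z:spt \<nu>|\<nu>. psi' z) + (LINT t:cbox 0 One|lborel. phi' t)) \<in> {ereal ((LINT z:spt \<nu>|\<nu>. psi z) + (LINT t:cbox 0 One|lborel. phi t)) |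
      psi phi (b :: 'y \<Rightarrow> 'x).
      continuous_on (spt \<nu>) psi \<and> continuous_on (cbox 0 One) phi \<and> continuous_on (cbox 0 One) b \<and>
      (\<forall>z\<in>spt \<nu>. \<forall>t\<in>cbox 0 One. dual_ok z (psi z) (phi t) (b t) t)}"
      by (rule CollectI, rule exI[of _ psi'], rule exI[of _ phi'], rule exI[of _ b'], intro conjI refl H)
  qed
qed

theorem mainTheorem2:
  fixes \<nu> :: "('x::euclidean_space \<times> 'y::euclidean_space) measure"
  assumes "prob_space \<nu>"
    and "sets \<nu> = sets borel"
    and "compact (spt \<nu>)"
    and "integrable \<nu> fst" and "(\<integral>z. fst z \<partial>\<nu>) = 0"
  shows "dual_value_cont \<nu> = dual_value_smooth \<nu> \<and> dual_value_smooth \<nu> = dual_value_L1 \<nu>"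
proof -
  have sm_sub: "dual_value_cont \<nu> \<le> dual_value_smooth \<nu>"
    unfolding dual_value_cont_def dual_value_smooth_def
    apply (rule Inf_superset_mono)
    apply (rule subsetI)
    apply (elim CollectE exE conjE)
    apply hypsubst
    apply (rule smooth_in_cont[OF assms(1,2,3)])
    apply assumption+
    done
  have sm_le: "dual_value_smooth \<nu> \<le> dual_value_cont \<nu>"
    unfolding dual_value_cont_def dual_value_smooth_def
    apply (rule Inf_le_approx)
    apply (elim CollectE exE conjE)
    apply hypsubst
    apply (rule cont_approx_smooth[OF assms(1,2,3)])
    apply assumption+
    done
  have L1_le: "dual_value_L1 \<nu> \<le> dual_value_cont \<nu>"
    unfolding dual_value_cont_def dual_value_L1_def
    apply (rule Inf_superset_mono)
    apply (rule subsetI)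
    apply (elim CollectE exE conjE)
    apply hypsubst
    apply (rule cont_in_L1[OF assms(1,2,3)])
    apply assumption+
    done
  have cont_le: "dual_value_cont \<nu> \<le> dual_value_L1 \<nu>"
    unfolding dual_value_cont_def dual_value_L1_def
    apply (rule Inf_le_approx)
    apply (elim CollectE exE conjE)
    apply hypsubst
    apply (rule L1_approx_cont[OF assms(1,2,3)])
    apply assumption+
    done
  show ?thesis using sm_sub sm_le L1_le cont_le by auto
qed

end
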